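(* Let $(\mathcal{M}^n,g)$ be a mixed super quasi-Einstein manifold (notation as in the context) which is conformal Ricci pseudosymmetric, i.e. there is a function $F_{\mathrm{Ric}}$ on $U_{\mathrm{Ric}}=\{x\in\mathcal{M}:\mathrm{Ric}\neq\frac{r}{n}g \text{ at } x\}$ such that on $U_{\mathrm{Ric}}$, for all $X,Y,Z,W$, $\mathrm{Ric}(C(X,Y)Z,W)+\mathrm{Ric}(Z,C(X,Y)W)=F_{\mathrm{Ric}}\big(g(Y,Z)\mathrm{Ric}(X,W)-g(X,Z)\mathrm{Ric}(Y,W)+g(Y,W)\mathrm{Ric}(X,Z)-g(X,W)\mathrm{Ric}(Y,Z)\big)$. Put $m=-\frac{(n-2)R(\xi_2,\xi_1,\xi_1,\xi_2)}{\Psi_5}+\mathcal{D}(\xi_2,\xi_2)$ and define the 1-form $\mathcal{E}(X)=\Big(R(\xi_2,\xi_1,\xi_1,\xi_2)-\frac{\Psi_5}{n-2}\mathcal{D}(\xi_2,\xi_2)\Big)\mathcal{B}(X)+\frac{\Psi_5}{n-2}\mathcal{D}(X,\xi_2)$. Then on $U_{\mathrm{Ric}}$: (1) if $m$ is not an eigenvalue of $\mathcal{D}$ corresponding to the eigenvector $\xi_2$, then $R(X,Y,\xi_1,\xi_2)=\mathcal{E}(X)\mathcal{A}(Y)-\mathcal{A}(X)\mathcal{E}(Y)$ for all $X,Y$; (2) if $m$ is an eigenvalue of $\mathcal{D}$ corresponding to the eigenvector $\xi_2$, then $R(X,Y,\xi_1,\xi_2)=0$ for all $X,Y$.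
   Context: $(\mathcal{M}^n,g)$, $n\ge 3$, is a non-flat Riemannian manifold with Levi-Civita connection $\nabla$, curvature $R(X,Y)Z=\nabla_X\nabla_YZ-\nabla_Y\nabla_XZ-\nabla_{[X,Y]}Z$, $R(X,Y,Z,W)=g(R(X,Y)Z,W)$, Ricci tensor $\mathrm{Ric}(Y,Z)=\operatorname{trace}(X\mapsto R(X,Y)Z)$, Ricci operator $Q$ ($\mathrm{Ric}(X,Y)=g(QX,Y)$), scalar curvature $r$. The conformal curvature tensor is $C(X,Y)Z=R(X,Y)Z-\frac{1}{n-2}\big(\mathrm{Ric}(Y,Z)X-\mathrm{Ric}(X,Z)Y+g(Y,Z)QX-g(X,Z)QY\big)+\frac{r}{(n-1)(n-2)}\big(g(Y,Z)X-g(X,Z)Y\big)$. $\mathcal{M}$ is a mixed super quasi-Einstein manifold if $\mathrm{Ric}$ is not identically zero and $\mathrm{Ric}(X,Y)=\Psi_1 g(X,Y)+\Psi_2\mathcal{A}(X)\mathcal{A}(Y)+\Psi_3\mathcal{B}(X)\mathcal{B}(Y)+\Psi_4(\mathcal{A}(X)\mathcal{B}(Y)+\mathcal{B}(X)\mathcal{A}(Y))+\Psi_5\mathcal{D}(X,Y)$, where $\Psi_1,\dots,\Psi_5$ are smooth functions with $\Psi_2,\Psi_3,\Psi_4,\Psi_5\neq 0$; $\xi_1,\xi_2$ are vector fields with $g(\xi_1,\xi_1)=g(\xi_2,\xi_2)=1$, $g(\xi_1,\xi_2)=0$; $\mathcal{A}(X)=g(X,\xi_1)$, $\mathcal{B}(X)=g(X,\xi_2)$;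 $\mathcal{D}$ is a symmetric trace-free $(0,2)$-tensor with $\mathcal{D}(X,\xi_1)=0$ for all $X$. A number/function $b$ is an eigenvalue of $\mathcal{D}$ corresponding to the eigenvector $U$ if $\mathcal{D}(X,U)=b\,g(X,U)$ for all $X$. *)

theory Defs
  imports "HOL-Analysis.Analysis"
begin

text \<open>Pointwise (tangent space at a point) setting. The tangent space is a finite
dimensional real inner product space 'v (euclidean_space), g = inner product.
A curvature operator R X Y Z, i.e. R(X,Y)Z.\<close>

definition alg_curv :: "('v::euclidean_space \<Rightarrow> 'v \<Rightarrow> 'v \<Rightarrow> 'v) \<Rightarrow> bool" where
  "alg_curv R \<longleftrightarrow>
     (\<forall>Y Z. linear (\<lambda>X. R X Y Z)) \<and> (\<forall>X Z. linear (\<lambda>Y. R X Y Z)) \<and>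
     (\<forall>X Y. linear (\<lambda>Z. R X Y Z)) \<and>
     (\<forall>X Y Z. R X Y Z = - R Y X Z) \<and>
     (\<forall>X Y Z W. inner (R X Y Z) W = - inner (R X Y W) Z) \<and>
     (\<forall>X Y Z. R X Y Z + R Y Z X + R Z X Y = 0)"

definition Rt :: "('v::euclidean_space \<Rightarrow> 'v \<Rightarrow> 'v \<Rightarrow> 'v) \<Rightarrow> 'v \<Rightarrow> 'v \<Rightarrow> 'v \<Rightarrow> 'v \<Rightarrow> real" where
  "Rt R X Y Z W = inner (R X Y Z) W"

definition Ric :: "('v::euclidean_space \<Rightarrow> 'v \<Rightarrow> 'v \<Rightarrow> 'v) \<Rightarrow> 'v \<Rightarrow> 'v \<Rightarrow> real" where
  "Ric R Y Z = (\<Sum>b\<in>Basis. inner (R b Y Z) b)"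

definition Qop :: "('v::euclidean_space \<Rightarrow> 'v \<Rightarrow> 'v \<Rightarrow> 'v) \<Rightarrow> 'v \<Rightarrow> 'v" where
  "Qop R X = (\<Sum>b\<in>Basis. Ric R X b *\<^sub>R b)"

definition scal :: "('v::euclidean_space \<Rightarrow> 'v \<Rightarrow> 'v \<Rightarrow> 'v) \<Rightarrow> real" where
  "scal R = (\<Sum>b\<in>Basis. Ric R b b)"

definition conf :: "('v::euclidean_space \<Rightarrow> 'v \<Rightarrow> 'v \<Rightarrow> 'v) \<Rightarrow> 'v \<Rightarrow> 'v \<Rightarrow> 'v \<Rightarrow> 'v" where
  "conf R X Y Z =
     (let n = real DIM('v) in
      R X Y Z
      - (1 / (n - 2)) *\<^sub>R (Ric R Y Z *\<^sub>R X - Ric R X Z *\<^sub>R Y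
                            + inner Y Z *\<^sub>R Qop R X - inner X Z *\<^sub>R Qop R Y)
      + (scal R / ((n - 1) * (n - 2))) *\<^sub>R (inner Y Z *\<^sub>R X - inner X Z *\<^sub>R Y))"

definition msqe ::
  "('v::euclidean_space \<Rightarrow> 'v \<Rightarrow> 'v \<Rightarrow> 'v) \<Rightarrow> real \<Rightarrow> real \<Rightarrow> real \<Rightarrow> real \<Rightarrow> real
     \<Rightarrow> 'v \<Rightarrow> 'v \<Rightarrow> ('v \<Rightarrow> 'v \<Rightarrow> real) \<Rightarrow> bool" where
  "msqe R \<Psi>1 \<Psi>2 \<Psi>3 \<Psi>4 \<Psi>5 \<xi>1 \<xi>2 D \<longleftrightarrow>
     (\<exists>X Y. Ric R X Y \<noteq> 0) \<and>
     \<Psi>2 \<noteq> 0 \<and> \<Psi>3 \<noteq> 0 \<and> \<Psi>4 \<noteq> 0 \<and> \<Psi>5 \<noteq> 0 \<and>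
     inner \<xi>1 \<xi>1 = 1 \<and> inner \<xi>2 \<xi>2 = 1 \<and> inner \<xi>1 \<xi>2 = 0 \<and>
     bilinear D \<and> (\<forall>X Y. D X Y = D Y X) \<and> (\<Sum>b\<in>Basis. D b b) = 0 \<and>
     (\<forall>X. D X \<xi>1 = 0) \<and>
     (\<forall>X Y. Ric R X Y = \<Psi>1 * inner X Y + \<Psi>2 * inner X \<xi>1 * inner Y \<xi>1
                 + \<Psi>3 * inner X \<xi>2 * inner Y \<xi>2
                 + \<Psi>4 * (inner X \<xi>1 * inner Y \<xi>2 + inner X \<xi>2 * inner Y \<xi>1)
                 + \<Psi>5 * D X Y)"

definition in_URic :: "('v::euclidean_space \<Rightarrow> 'v \<Rightarrow> 'v \<Rightarrow> 'v) \<Rightarrow> bool" where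
  "in_URic R \<longleftrightarrow> \<not> (\<forall>X Y. Ric R X Y = scal R / real DIM('v) * inner X Y)"

definition conf_ric_pseudosym :: "('v::euclidean_space \<Rightarrow> 'v \<Rightarrow> 'v \<Rightarrow> 'v) \<Rightarrow> real \<Rightarrow> bool" where
  "conf_ric_pseudosym R F \<longleftrightarrow>
     (\<forall>X Y Z W. Ric R (conf R X Y Z) W + Ric R Z (conf R X Y W) =
        F * (inner Y Z * Ric R X W - inner X Z * Ric R Y W
             + inner Y W * Ric R X Z - inner X W * Ric R Y Z))"

definition is_eigen :: "('v::euclidean_space \<Rightarrow> 'v \<Rightarrow> real) \<Rightarrow> real \<Rightarrow> 'v \<Rightarrow> bool" where
  "is_eigen D b U \<longleftrightarrow> (\<forall>X. D X U = b * inner X U)"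

end

theory Submission
  imports Defs
begin

lemma Ric_linear2:
  assumes "alg_curv R"
  shows "linear (\<lambda>V. Ric R X V)"
proof -
  have l: "\<And>b. linear (\<lambda>V. R b X V)" using assms unfolding alg_curv_def by blast
  have "\<And>b. linear (\<lambda>V. inner (R b X V) b)"
    using linear_compose[OF l bounded_linear.linear[OF bounded_linear_inner_left]] by (simp add: o_def)
  then show ?thesis unfolding Ric_def by (intro linear_compose_sum) auto
qed

lemma Qop_inner:
  assumes "alg_curv R"
  shows "inner (Qop R X) V = Ric R X V"
proof -
  interpret linear "\<lambda>V. Ric R X V" by (rule Ric_linear2[OF assms])
  have "Ric R X V = Ric R X (\<Sum>b\<in>Basis. inner V b *\<^sub>R b)"
    by (simp add: euclidean_representation)
  also have "\<dots> = (\<Sum>b\<in>Basis. inner V b * Ric R X b)"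
    by (simp add: sum scale)
  moreover have "inner (Qop R X) V = (\<Sum>b\<in>Basis. Ric R X b * inner b V)"
    unfolding Qop_def by (simp add: inner_sum_left)
  ultimately show ?thesis by (simp add: inner_commute mult.commute)
qed

lemma aux:
  fixes r K L Db Dd a b c d m :: real
  assumes "r = (K*b + L*Db)*c - a*(K*d+L*Dd)" "Db = m*b" "Dd = m*d" "K + L*m = 0"
  shows "r = 0"
proof -
  have "r = (K+L*m)*(b*c-a*d)" using assms(1-3) by (simp add: algebra_simps)
  then show ?thesis using assms(4) by simp
qed

theorem mainTheorem3:
  fixes R :: "'v::euclidean_space \<Rightarrow> 'v \<Rightarrow> 'v \<Rightarrow> 'v"
    and \<Psi>1 \<Psi>2 \<Psi>3 \<Psi>4 \<Psi>5 F :: real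
    and \<xi>1 \<xi>2 :: 'v
    and D :: "'v \<Rightarrow> 'v \<Rightarrow> real"
  assumes "DIM('v) \<ge> 3"
    and "alg_curv R"
    and "msqe R \<Psi>1 \<Psi>2 \<Psi>3 \<Psi>4 \<Psi>5 \<xi>1 \<xi>2 D"
    and "in_URic R"
    and "conf_ric_pseudosym R F"
  shows "(let n = real DIM('v);
              m = - ((n - 2) * Rt R \<xi>2 \<xi>1 \<xi>1 \<xi>2) / \<Psi>5 + D \<xi>2 \<xi>2;
              E = (\<lambda>X. (Rt R \<xi>2 \<xi>1 \<xi>1 \<xi>2 - \<Psi>5 / (n - 2) * D \<xi>2 \<xi>2) * inner X \<xi>2
                         + \<Psi>5 / (n - 2) * D X \<xi>2)
          in (\<not> is_eigen D m \<xi>2 \<longrightarrow>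
                (\<forall>X Y. Rt R X Y \<xi>1 \<xi>2 = E X * inner Y \<xi>1 - inner X \<xi>1 * E Y)) \<and>
             (is_eigen D m \<xi>2 \<longrightarrow> (\<forall>X Y. Rt R X Y \<xi>1 \<xi>2 = 0)))"
proof -
  define n where "n = real DIM('v)"
  have n2: "n - 2 > 0" using assms(1) unfolding n_def by simp
  have n1: "n - 1 > 0" using n2 by simp
  note M = assms(3)[unfolded msqe_def]
  have P5: "\<Psi>5 \<noteq> 0" and P4: "\<Psi>4 \<noteq> 0" using M by auto
  have x11: "inner \<xi>1 \<xi>1 = 1" and x22: "inner \<xi>2 \<xi>2 = 1" and x12: "inner \<xi>1 \<xi>2 = 0"
    using M by auto
  have x21: "inner \<xi>2 \<xi>1 = 0" using x12 by (simp add: inner_commute)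
  have Dsym: "\<And>X Y. D X Y = D Y X" and D1: "\<And>X. D X \<xi>1 = 0" using M by auto
  have D1': "\<And>X. D \<xi>1 X = 0" using Dsym D1 by metis
  have RicE: "\<And>X Y. Ric R X Y = \<Psi>1 * inner X Y + \<Psi>2 * inner X \<xi>1 * inner Y \<xi>1
                 + \<Psi>3 * inner X \<xi>2 * inner Y \<xi>2
                 + \<Psi>4 * (inner X \<xi>1 * inner Y \<xi>2 + inner X \<xi>2 * inner Y \<xi>1)
                 + \<Psi>5 * D X Y" using M by blast
  have Rx1: "\<And>V. Ric R V \<xi>1 = (\<Psi>1 + \<Psi>2) * inner V \<xi>1 + \<Psi>4 * inner V \<xi>2"
    by (simp add: RicE x11 x12 x21 D1 algebra_simps)
  have R1x: "\<And>V. Ric R \<xi>1 V = (\<Psi>1 + \<Psi>2) * inner V \<xi>1 + \<Psi>4 * inner V \<xi>2"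
    by (simp add: RicE x11 x12 D1' algebra_simps inner_commute)
  have Rx2: "\<And>V. Ric R V \<xi>2 = (\<Psi>1 + \<Psi>3) * inner V \<xi>2 + \<Psi>4 * inner V \<xi>1 + \<Psi>5 * D V \<xi>2"
    by (simp add: RicE x22 x12 x21 algebra_simps)
  have skew: "\<And>X Y Z W. inner (R X Y Z) W = - inner (R X Y W) Z"
    using assms(2) unfolding alg_curv_def by blast
  have Q: "\<And>X V. inner (Qop R X) V = Ric R X V" by (rule Qop_inner[OF assms(2)])
  define r where "r = scal R"
  have confI: "\<And>X Y Z V. inner (conf R X Y Z) V = inner (R X Y Z) V
      - (1 / (n - 2)) * (Ric R Y Z * inner X V - Ric R X Z * inner Y V
                        + inner Y Z * Ric R X V - inner X Z * Ric R Y V)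
      + (r / ((n - 1) * (n - 2))) * (inner Y Z * inner X V - inner X Z * inner Y V)"
    unfolding conf_def Let_def n_def r_def
    by (simp add: inner_diff_left inner_add_left Q)
  have key: "Rt R X Y \<xi>1 \<xi>2 = (F + (2*\<Psi>1+\<Psi>2+\<Psi>3)/(n-2) - r/((n-1)*(n-2)))
       * (inner X \<xi>2 * inner Y \<xi>1 - inner X \<xi>1 * inner Y \<xi>2)
       + \<Psi>5/(n-2) * (D X \<xi>2 * inner Y \<xi>1 - inner X \<xi>1 * D Y \<xi>2)" for X Y
  proof -
    have ps: "Ric R (conf R X Y \<xi>1) \<xi>1 + Ric R \<xi>1 (conf R X Y \<xi>1) =
        F * (inner Y \<xi>1 * Ric R X \<xi>1 - inner X \<xi>1 * Ric R Y \<xi>1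
             + inner Y \<xi>1 * Ric R X \<xi>1 - inner X \<xi>1 * Ric R Y \<xi>1)"
      using assms(5) unfolding conf_ric_pseudosym_def by blast
    have c11: "inner (conf R X Y \<xi>1) \<xi>1 = 0"
      using confI[of X Y \<xi>1 \<xi>1] skew[of X Y \<xi>1 \<xi>1]
      by (simp add: algebra_simps)
    have c12: "inner (conf R X Y \<xi>1) \<xi>2 = F * (inner X \<xi>2 * inner Y \<xi>1 - inner X \<xi>1 * inner Y \<xi>2)"
    proof -
      have "2 * \<Psi>4 * inner (conf R X Y \<xi>1) \<xi>2 = 2 * \<Psi>4 * (F * (inner X \<xi>2 * inner Y \<xi>1 - inner X \<xi>1 * inner Y \<xi>2))"
        using ps by (simp add: Rx1 R1x c11 algebra_simps)
      then show ?thesis using P4 by simp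
    qed
    have "inner (conf R X Y \<xi>1) \<xi>2 = Rt R X Y \<xi>1 \<xi>2
      - (1 / (n - 2)) * ((2*\<Psi>1+\<Psi>2+\<Psi>3) * (inner X \<xi>2 * inner Y \<xi>1 - inner X \<xi>1 * inner Y \<xi>2)
           + \<Psi>5 * (D X \<xi>2 * inner Y \<xi>1 - inner X \<xi>1 * D Y \<xi>2))
      + (r / ((n - 1) * (n - 2))) * (inner X \<xi>2 * inner Y \<xi>1 - inner X \<xi>1 * inner Y \<xi>2)"
      using confI[of X Y \<xi>1 \<xi>2] by (simp add: Rx1 Rx2 Rt_def algebra_simps)
    then have e: "Rt R X Y \<xi>1 \<xi>2 = F * (inner X \<xi>2 * inner Y \<xi>1 - inner X \<xi>1 * inner Y \<xi>2)
      + (1 / (n - 2)) * ((2*\<Psi>1+\<Psi>2+\<Psi>3) * (inner X \<xi>2 * inner Y \<xi>1 - inner X \<xi>1 * inner Y \<xi>2)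
           + \<Psi>5 * (D X \<xi>2 * inner Y \<xi>1 - inner X \<xi>1 * D Y \<xi>2))
      - (r / ((n - 1) * (n - 2))) * (inner X \<xi>2 * inner Y \<xi>1 - inner X \<xi>1 * inner Y \<xi>2)"
      using c12 by linarith
    have dv: "\<And>a b::real. a / b = a * (1 / b)" by simp
    show ?thesis unfolding e
      apply (subst dv[of "2*\<Psi>1+\<Psi>2+\<Psi>3"])
      apply (subst dv[of "\<Psi>5"])
      by (simp only: algebra_simps)
  qed
  define k where "k = F + (2*\<Psi>1+\<Psi>2+\<Psi>3)/(n-2) - r/((n-1)*(n-2))"
  have kv: "k = Rt R \<xi>2 \<xi>1 \<xi>1 \<xi>2 - \<Psi>5/(n-2) * D \<xi>2 \<xi>2"
    using key[of \<xi>2 \<xi>1] by (simp add: k_def x11 x22 x12 x21 D1')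
  have part1: "\<forall>X Y. Rt R X Y \<xi>1 \<xi>2 =
      ((Rt R \<xi>2 \<xi>1 \<xi>1 \<xi>2 - \<Psi>5 / (n - 2) * D \<xi>2 \<xi>2) * inner X \<xi>2 + \<Psi>5 / (n - 2) * D X \<xi>2) * inner Y \<xi>1
      - inner X \<xi>1 * ((Rt R \<xi>2 \<xi>1 \<xi>1 \<xi>2 - \<Psi>5 / (n - 2) * D \<xi>2 \<xi>2) * inner Y \<xi>2 + \<Psi>5 / (n - 2) * D Y \<xi>2)"
    using key kv unfolding k_def[symmetric] by (simp add: algebra_simps)
  have part2: "\<forall>X Y. Rt R X Y \<xi>1 \<xi>2 = 0"
    if eig: "is_eigen D (- ((n - 2) * Rt R \<xi>2 \<xi>1 \<xi>1 \<xi>2) / \<Psi>5 + D \<xi>2 \<xi>2) \<xi>2"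
  proof (intro allI)
    fix X Y
    let ?m = "- ((n - 2) * Rt R \<xi>2 \<xi>1 \<xi>1 \<xi>2) / \<Psi>5 + D \<xi>2 \<xi>2"
    have e: "\<And>V. D V \<xi>2 = ?m * inner V \<xi>2" using eig unfolding is_eigen_def by blast
    have z: "Rt R \<xi>2 \<xi>1 \<xi>1 \<xi>2 - \<Psi>5 / (n - 2) * D \<xi>2 \<xi>2 + \<Psi>5 / (n - 2) * ?m = 0"
      using P5 n2 by (simp add: field_simps)
    show "Rt R X Y \<xi>1 \<xi>2 = 0"
      using aux[OF spec[OF spec[OF part1, of X], of Y] e[of X] e[of Y] z] .
  qed
  show ?thesis unfolding Let_def n_def[symmetric] using part1 part2 by blast
qed

end
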